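(* Let $(A,\Phi)\in\mathbf{AP}$ and $\tilde A(t,x):=A(t,x)-\frac1T\int_0^TA(s,x)ds$. Suppose there is $\{b_n\}\subset\mathcal S^c$ with $|b_n|\to\infty$ such that: $\partial_tA(\cdot,b_n)\not\equiv0$ for all $n$; $\lim_{n}\varphi(b_n)\big(\int_0^T|\tilde A(t,b_n)|^2dt\big)^{-1}=0$; and $\lim_n\max\{|\nabla\Phi(t,y)|: t\in[0,T], y\in\mathcal S^c, |y|\ge|b_n|-T\}\big(\int_0^T|\tilde A(t,b_n)|^2dt\big)^{-1/2}=0$. Then there exists $q\in\mathcal K_\Lambda$ with $\mathcal I(q)<0$.
   Context: Fix $T>0$ and a compact $\mathcal S\subset\mathbb R^3$ (possibly empty), $\mathcal S^c=\mathbb R^3\setminus\mathcal S$. $\mathcal A$ is the set of $A\in\mathcal C^1(\mathbb R^4;\mathbb R^3)$, $A=A(t,x)$, $T$-periodic in $t$, with $\partial_tA\not\equiv0$ and $\lim_{|x|\to\infty}(|\partial_tA|+|\nabla A|)=0$ uniformly in $t$ ($\nabla$ = spatial derivative). $\mathcal P$ is the set of $\Phi:\mathbb R\times\mathcal S^c\to\mathbb R$ bounded above, $T$-periodic and continuous in $t$, $\Phi(t,\cdot)\in\mathcal C^1(\mathcal S^c)$, $\lim_{|x|\to\infty}|\nabla\Phi(t,x)|=0$ uniformly in $t$, and, if $\mathcal S\ne\emptyset$, for each $x_0\in\partial\mathcal S$, $t_0\in[0,T]$ there are $\varepsilon,r>0$ with $-\Phi(t,x)\ge r/|x-x_0|$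 whenever $|x-x_0|,|t-t_0|<\varepsilon$, $x\in\mathcal S^c$. $\varphi(x)=\int_0^T\Phi(t,x)dt$, normalized so that $\sup_{\mathcal S^c}\varphi=0$. $\mathbf{AP}$ = pairs $(A,\Phi)\in\mathcal A\times\mathcal P$ with $\partial_tA+\nabla\Phi\not\equiv0$. $\mathcal W$ = Lipschitz $T$-periodic $q:\mathbb R\to\mathbb R^3$ with norm $\|q\|_\infty+\|\dot q\|_\infty$; $\mathcal K=\{q\in\mathcal W:\|\dot q\|_\infty\le1\}$; $\Lambda=\{q\in\mathcal W: q(t)\notin\mathcal S\ \forall t\}$; $\mathcal K_\Lambda=\mathcal K\cap\Lambda$. $\mathcal I(q)=\int_0^T(1-\sqrt{1-|\dot q|^2})dt+\int_0^T(\dot q\cdot A(t,q)-\Phi(t,q))dt$ for $q\in\mathcal K_\Lambda$ and $\mathcal I(q)=+\infty$ for $q\in\Lambda\setminus\mathcal K_\Lambda$. *)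

theory Defs
  imports "HOL-Analysis.Analysis"
begin

type_synonym vec3 = "real^3"

definition dtA :: "(real \<Rightarrow> vec3 \<Rightarrow> vec3) \<Rightarrow> real \<Rightarrow> vec3 \<Rightarrow> vec3" where
  "dtA A t x = vector_derivative (\<lambda>s. A s x) (at t)"

definition grad :: "(real \<Rightarrow> vec3 \<Rightarrow> real) \<Rightarrow> real \<Rightarrow> vec3 \<Rightarrow> vec3" where
  "grad Phi t x = (\<chi> i. frechet_derivative (Phi t) (at x) (axis i 1))"

definition classA :: "real \<Rightarrow> (real \<Rightarrow> vec3 \<Rightarrow> vec3) \<Rightarrow> bool" where
  "classA T A \<longleftrightarrow>
     (\<exists>D :: real \<times> vec3 \<Rightarrow> (real \<times> vec3) \<Rightarrow>\<^sub>L vec3.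
         (\<forall>z. ((\<lambda>z. A (fst z) (snd z)) has_derivative blinfun_apply (D z)) (at z))
         \<and> continuous_on UNIV D)
   \<and> (\<forall>t x. A (t + T) x = A t x)
   \<and> (\<exists>t x. dtA A t x \<noteq> 0)
   \<and> (\<forall>e>0. \<exists>R. \<forall>t x. norm x \<ge> R \<longrightarrow>
          norm (dtA A t x) + onorm (frechet_derivative (A t) (at x)) < e)"

definition phi :: "real \<Rightarrow> (real \<Rightarrow> vec3 \<Rightarrow> real) \<Rightarrow> vec3 \<Rightarrow> real" where
  "phi T Phi x = integral {0..T} (\<lambda>t. Phi t x)"

definition classP :: "real \<Rightarrow> vec3 set \<Rightarrow> (real \<Rightarrow> vec3 \<Rightarrow> real) \<Rightarrow> bool" where
  "classP T S Phi \<longleftrightarrow>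
     (\<exists>M. \<forall>t. \<forall>x\<in>-S. Phi t x \<le> M)
   \<and> (\<forall>t. \<forall>x\<in>-S. Phi (t + T) x = Phi t x)
   \<and> (\<forall>x\<in>-S. continuous_on UNIV (\<lambda>t. Phi t x))
   \<and> (\<forall>t. (\<forall>x\<in>-S. Phi t differentiable (at x)) \<and> continuous_on (-S) (grad Phi t))
   \<and> (\<forall>e>0. \<exists>R. \<forall>t. \<forall>x\<in>-S. norm x \<ge> R \<longrightarrow> norm (grad Phi t x) < e)
   \<and> (S \<noteq> {} \<longrightarrow> (\<forall>x0\<in>frontier S. \<forall>t0\<in>{0..T}. \<exists>e>0. \<exists>r>0.
          \<forall>t. \<forall>x\<in>-S. dist x x0 < e \<and> \<bar>t - t0\<bar> < e \<longrightarrow> - Phi t x \<ge> r / dist x x0))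
   \<and> (SUP x\<in>-S. phi T Phi x) = 0"

definition AP :: "real \<Rightarrow> vec3 set \<Rightarrow> (real \<Rightarrow> vec3 \<Rightarrow> vec3) \<Rightarrow> (real \<Rightarrow> vec3 \<Rightarrow> real) \<Rightarrow> bool" where
  "AP T S A Phi \<longleftrightarrow> classA T A \<and> classP T S Phi
     \<and> (\<exists>t. \<exists>x\<in>-S. dtA A t x + grad Phi t x \<noteq> 0)"

definition W :: "real \<Rightarrow> (real \<Rightarrow> vec3) set" where
  "W T = {q. (\<exists>L. L-lipschitz_on UNIV q) \<and> (\<forall>t. q (t + T) = q t)}"

definition K :: "real \<Rightarrow> (real \<Rightarrow> vec3) set" where
  "K T = {q \<in> W T. AE t in lebesgue. q differentiable (at t) \<longrightarrow> norm (vector_derivative q (at t)) \<le> 1}"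

definition Lam :: "real \<Rightarrow> vec3 set \<Rightarrow> (real \<Rightarrow> vec3) set" where
  "Lam T S = {q \<in> W T. \<forall>t. q t \<notin> S}"

definition KLam :: "real \<Rightarrow> vec3 set \<Rightarrow> (real \<Rightarrow> vec3) set" where
  "KLam T S = K T \<inter> Lam T S"

definition action :: "real \<Rightarrow> vec3 set \<Rightarrow> (real \<Rightarrow> vec3 \<Rightarrow> vec3) \<Rightarrow> (real \<Rightarrow> vec3 \<Rightarrow> real)
     \<Rightarrow> (real \<Rightarrow> vec3) \<Rightarrow> ereal" where
  "action T S A Phi q =
     (if q \<in> KLam T S then
        ereal (integral {0..T} (\<lambda>t. 1 - sqrt (1 - (norm (vector_derivative q (at t)))\<^sup>2))
             + integral {0..T} (\<lambda>t. vector_derivative q (at t) \<bullet> A t (q t) - Phi t (q t)))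
      else \<infinity>)"

definition Atil :: "real \<Rightarrow> (real \<Rightarrow> vec3 \<Rightarrow> vec3) \<Rightarrow> real \<Rightarrow> vec3 \<Rightarrow> vec3" where
  "Atil T A t x = A t x - (1 / T) *\<^sub>R integral {0..T} (\<lambda>s. A s x)"

end

theory Submission
  imports Defs
begin

lemma periodic_shift_nat:
  fixes f :: "real \<Rightarrow> 'a"
  assumes "\<forall>t. f (t + T) = f t"
  shows "f (x + real m * T) = f x"
proof (induction m)
  case 0 then show ?case by simp
next
  case (Suc m)
  have "f (x + real (Suc m) * T) = f ((x + real m * T) + T)" by (simp add: algebra_simps)
  also have "\<dots> = f (x + real m * T)" using assms by simp
  finally show ?case using Suc by simp
qed

lemma periodic_shift_int:
  fixes f :: "real \<Rightarrow> 'a"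
  assumes "\<forall>t. f (t + T) = f t"
  shows "f (x + real_of_int k * T) = f x"
proof (cases "k \<ge> 0")
  case True
  then obtain m where "k = int m" by (metis nonneg_int_cases)
  then show ?thesis using periodic_shift_nat[OF assms] by simp
next
  case False
  then obtain m where m: "k = - int m" by (metis neg_int_cases less_le not_le minus_minus)
  have "f ((x + real_of_int k * T) + real m * T) = f (x + real_of_int k * T)"
    using periodic_shift_nat[OF assms] by blast
  then show ?thesis using m by simp
qed

lemma periodic_reduce:
  fixes f :: "real \<Rightarrow> 'a" and T t :: real
  assumes "T > 0" "\<forall>t. f (t + T) = f t"
  shows "\<exists>s\<in>{0..T}. f t = f s"
proof -
  define k where "k = \<lfloor>t / T\<rfloor>"
  define s where "s = t - real_of_int k * T"
  have "real_of_int k \<le> t / T" "t / T < real_of_int k + 1" unfolding k_def by linarith+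
  then have "real_of_int k * T \<le> t" "t < (real_of_int k + 1) * T"
    using assms(1) by (simp_all add: field_simps)
  then have "s \<in> {0..T}" unfolding s_def by (auto simp: algebra_simps)
  moreover have "f t = f s"
    using periodic_shift_int[OF assms(2), of s k] unfolding s_def by simp
  ultimately show ?thesis by blast
qed

lemma antiderivative_UNIV:
  fixes u :: "real \<Rightarrow> 'a::banach"
  assumes cu: "continuous_on UNIV u"
  shows "\<exists>g. (\<forall>t. (g has_vector_derivative u t) (at t)) \<and> (\<forall>t\<ge>0. g t = integral {0..t} u)"
proof -
  define g where "g t = integral {0..t} u - integral {t..0} u" for t
  have intg: "u integrable_on {c..d}" for c d
    by (rule integrable_continuous_real) (rule continuous_on_subset[OF cu], simp)
  have "(g has_vector_derivative u t) (at t)" for t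
  proof -
    define a where "a = min 0 t - 1"
    define c where "c = max 0 t + 1"
    have eq: "g y = integral {a..y} u - integral {a..0} u" if "y \<in> {a<..<c}" for y
    proof (cases "y \<ge> 0")
      case True
      have "integral {a..0} u + integral {0..y} u = integral {a..y} u"
        using True that a_def by (intro Henstock_Kurzweil_Integration.integral_combine[OF _ _ intg]) auto
      moreover have "integral {y..0} u = 0"
        using True by (cases "y = 0") auto
      ultimately show ?thesis unfolding g_def by (simp add: algebra_simps)
    next
      case False
      have "integral {a..y} u + integral {y..0} u = integral {a..0} u"
        using False that a_def by (intro Henstock_Kurzweil_Integration.integral_combine[OF _ _ intg]) auto
      moreover have "integral {0..y} u = 0" using False by simp
      ultimately show ?thesis unfolding g_def by (simp add: algebra_simps)
    qed
    have t: "t \<in> {a<..<c}" unfolding a_def c_def by auto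
    have "((\<lambda>y. integral {a..y} u) has_vector_derivative u t) (at t within {a..c})"
      using t by (intro integral_has_vector_derivative continuous_on_subset[OF cu]) auto
    then have "((\<lambda>y. integral {a..y} u) has_vector_derivative u t) (at t)"
      using t by (subst (asm) at_within_interior) (auto simp: interior_atLeastAtMost_real)
    then have "((\<lambda>y. integral {a..y} u - integral {a..0} u) has_vector_derivative u t - 0) (at t)"
      by (intro derivative_intros)
    then have "((\<lambda>y. integral {a..y} u - integral {a..0} u) has_vector_derivative u t) (at t)"
      by simp
    then show ?thesis
      using has_vector_derivative_transform_within_open[of _ "u t" t "{a<..<c}" g] t eq by auto
  qed
  moreover have "\<forall>t\<ge>0. g t = integral {0..t} u"
  proof (intro allI impI)
    fix t :: real assume "t \<ge> 0"
    then have "integral {t..0} u = 0" by (cases "t = 0") auto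
    then show "g t = integral {0..t} u" unfolding g_def by simp
  qed
  ultimately show ?thesis by blast
qed

lemma classA_facts:
  fixes A :: "real \<Rightarrow> vec3 \<Rightarrow> vec3"
  assumes "classA T A"
  shows "\<And>t x. ((\<lambda>s. A s x) has_vector_derivative dtA A t x) (at t)"
    and "\<And>t x. (A t has_derivative frechet_derivative (A t) (at x)) (at x)"
    and "continuous_on UNIV (\<lambda>z. A (fst z) (snd z))"
    and "\<And>t x. A (t + T) x = A t x"
    and "\<And>e. e > 0 \<Longrightarrow> \<exists>R. \<forall>t x. norm x \<ge> R \<longrightarrow>
          norm (dtA A t x) + onorm (frechet_derivative (A t) (at x)) < e"
proof -
  have cA: "(\<exists>D :: real \<times> vec3 \<Rightarrow> (real \<times> vec3) \<Rightarrow>\<^sub>L vec3.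
         (\<forall>z. ((\<lambda>z. A (fst z) (snd z)) has_derivative blinfun_apply (D z)) (at z))
         \<and> continuous_on UNIV D)"
   "(\<forall>t x. A (t + T) x = A t x)"
   "(\<forall>e>0. \<exists>R. \<forall>t x. norm x \<ge> R \<longrightarrow>
          norm (dtA A t x) + onorm (frechet_derivative (A t) (at x)) < e)"
    using assms unfolding classA_def by simp_all
  obtain D :: "real \<times> vec3 \<Rightarrow> (real \<times> vec3) \<Rightarrow>\<^sub>L vec3" where
    D: "\<And>z. ((\<lambda>z. A (fst z) (snd z)) has_derivative blinfun_apply (D z)) (at z)"
    using cA(1) by blast
  show "continuous_on UNIV (\<lambda>z. A (fst z) (snd z))"
    by (intro continuous_at_imp_continuous_on ballI has_derivative_continuous[OF D])
  show "\<And>t x. A (t + T) x = A t x" using cA(2) by blast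
  show "\<And>e. e > 0 \<Longrightarrow> \<exists>R. \<forall>t x. norm x \<ge> R \<longrightarrow>
          norm (dtA A t x) + onorm (frechet_derivative (A t) (at x)) < e"
    using cA(3) by blast
  fix t :: real and x :: vec3
  have p: "((\<lambda>s. (s, x)) has_derivative (\<lambda>h. (h, 0))) (at t)"
    by (rule has_derivative_Pair[OF has_derivative_ident has_derivative_const])
  have "((\<lambda>s. A s x) has_derivative (\<lambda>h. blinfun_apply (D (t, x)) (h, 0))) (at t)"
    using has_derivative_compose[OF p D[of "(t,x)"]] by (simp add: o_def)
  moreover have "(\<lambda>h. blinfun_apply (D (t, x)) (h, 0)) = (\<lambda>h. h *\<^sub>R blinfun_apply (D (t, x)) (1, 0))"
  proof
    fix h :: real
    show "blinfun_apply (D (t, x)) (h, 0) = h *\<^sub>R blinfun_apply (D (t, x)) (1, 0)"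
      using blinfun.scaleR_right[of "D (t,x)" h "(1,0)"] by simp
  qed
  ultimately have v: "((\<lambda>s. A s x) has_vector_derivative blinfun_apply (D (t, x)) (1, 0)) (at t)"
    unfolding has_vector_derivative_def by (simp only:)
  then have "dtA A t x = blinfun_apply (D (t, x)) (1, 0)"
    unfolding dtA_def by (rule vector_derivative_at)
  then show "((\<lambda>s. A s x) has_vector_derivative dtA A t x) (at t)" using v by simp
  have p2: "((\<lambda>y. (t, y)) has_derivative (\<lambda>h. (0, h))) (at x)"
    by (rule has_derivative_Pair[OF has_derivative_const has_derivative_ident])
  have "A t differentiable (at x)"
    using has_derivative_compose[OF p2 D[of "(t,x)"]] unfolding differentiable_def o_def by auto
  then show "(A t has_derivative frechet_derivative (A t) (at x)) (at x)"
    using frechet_derivative_works by blast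
qed

lemma frechet_grad_onorm:
  fixes Phi :: "real \<Rightarrow> vec3 \<Rightarrow> real"
  assumes "Phi t differentiable (at x)"
  shows "onorm (frechet_derivative (Phi t) (at x)) \<le> norm (grad Phi t x)"
proof -
  let ?f = "frechet_derivative (Phi t) (at x)"
  have bl: "bounded_linear ?f"
    using assms frechet_derivative_works has_derivative_bounded_linear by blast
  then have lin: "linear ?f" by (rule bounded_linear.linear)
  have eq: "?f h = grad Phi t x \<bullet> h" for h
  proof -
    have "h = (\<Sum>i\<in>UNIV. (h$i) *\<^sub>R axis i (1::real))"
      using basis_expansion[of h] by (simp add: scalar_mult_eq_scaleR)
    then have "?f h = ?f (\<Sum>i\<in>UNIV. (h$i) *\<^sub>R axis i (1::real))" by simp
    also have "\<dots> = (\<Sum>i\<in>UNIV. (h$i) * ?f (axis i 1))"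
      using lin by (simp add: linear_sum linear_scale o_def)
    also have "\<dots> = grad Phi t x \<bullet> h"
      unfolding grad_def inner_vec_def by (simp add: mult.commute)
    finally show ?thesis .
  qed
  show ?thesis
  proof (rule onorm_le)
    fix h
    show "norm (?f h) \<le> norm (grad Phi t x) * norm h"
      unfolding eq by (simp add: Cauchy_Schwarz_ineq2)
  qed
qed

lemma onorm_scaleR_vec: "onorm (\<lambda>h::real. h *\<^sub>R (v::'a::real_normed_vector)) = norm v"
  using onorm_scaleR_left[OF bounded_linear_ident, of v] by (simp add: onorm_id)

lemma kin_bound:
  fixes s :: real
  assumes "0 \<le> s" "s \<le> 1"
  shows "1 - sqrt (1 - s\<^sup>2) \<le> s\<^sup>2"
proof -
  define y where "y = 1 - s\<^sup>2"
  have "s\<^sup>2 \<le> 1" using assms by (simp add: power_le_one)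
  then have y0: "0 \<le> y" and y1: "y \<le> 1" unfolding y_def by auto
  have "sqrt y \<le> 1" using y1 by simp
  moreover have "sqrt y \<ge> 0" using y0 by simp
  ultimately have "sqrt y * sqrt y \<le> sqrt y" by (rule mult_left_le)
  moreover have "sqrt y * sqrt y = y" using y0 by simp
  ultimately have "y \<le> sqrt y" by linarith
  then show ?thesis unfolding y_def by simp
qed

lemma inner_expand:
  fixes U M D :: "'a::real_inner"
  shows "- (lam *\<^sub>R U) \<bullet> (U + M + D) = - lam * (norm U)\<^sup>2 - lam * (U \<bullet> M) - lam * (U \<bullet> D)"
  by (simp add: inner_add_right power2_norm_eq_inner algebra_simps)

lemma core:
  fixes T :: real and S :: "vec3 set"
    and A :: "real \<Rightarrow> vec3 \<Rightarrow> vec3" and Phi :: "real \<Rightarrow> vec3 \<Rightarrow> real"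
    and bz :: vec3 and RA RP BS :: real
  assumes T0: "T > 0"
    and vA: "\<And>t x. ((\<lambda>s. A s x) has_vector_derivative dtA A t x) (at t)"
    and fA: "\<And>t x. (A t has_derivative frechet_derivative (A t) (at x)) (at x)"
    and cA: "continuous_on UNIV (\<lambda>z. A (fst z) (snd z))"
    and perA: "\<And>t x. A (t + T) x = A t x"
    and RA: "\<forall>t x. norm x \<ge> RA \<longrightarrow> norm (dtA A t x) + onorm (frechet_derivative (A t) (at x)) < 1"
    and P3: "\<forall>x\<in>-S. continuous_on UNIV (\<lambda>t. Phi t x)"
    and P4: "\<forall>t. \<forall>x\<in>-S. Phi t differentiable (at x)"
    and RP: "\<forall>t. \<forall>x\<in>-S. norm x \<ge> RP \<longrightarrow> norm (grad Phi t x) < 1"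
    and BS: "\<forall>x\<in>S. norm x \<le> BS"
    and bzA: "norm bz \<ge> T + RA" and bzP: "norm bz \<ge> T + RP" and bzS: "norm bz \<ge> T + BS + 1"
    and dt: "\<exists>t. dtA A t bz \<noteq> 0"
    and h7: "\<bar>phi T Phi bz / integral {0..T} (\<lambda>t. (norm (Atil T A t bz))\<^sup>2)\<bar> < (1 / (2 * (1 + T))) / 4"
    and h8: "\<bar>(SUP (t, y)\<in>{(t, y). t \<in> {0..T} \<and> y \<notin> S \<and> norm y \<ge> norm bz - T}.
                 norm (grad Phi t y))
             / sqrt (integral {0..T} (\<lambda>t. (norm (Atil T A t bz))\<^sup>2))\<bar> < 1 / (4 * T * sqrt T)"
  shows "\<exists>q\<in>KLam T S. action T S A Phi q < 0"
proof -
  define lam where "lam = 1 / (2 * (1 + T))"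
  define u where "u t = Atil T A t bz" for t
  define m where "m = (1 / T) *\<^sub>R integral {0..T} (\<lambda>s. A s bz)"
  define a where "a = integral {0..T} (\<lambda>t. (norm (u t))\<^sup>2)"
  define Set where "Set = {(t, y). t \<in> {0..T} \<and> y \<notin> S \<and> norm y \<ge> norm bz - T}"
  define G where "G = (SUP (t, y)\<in>Set. norm (grad Phi t y))"
  have lam0: "lam > 0" and lamT: "lam * (1 + T) = 1/2" using T0 by (auto simp: lam_def field_simps)
  have h7': "\<bar>phi T Phi bz / a\<bar> < lam / 4" using h7 unfolding a_def u_def lam_def by simp
  have h8': "\<bar>G / sqrt a\<bar> < 1 / (4 * T * sqrt T)" using h8 unfolding a_def u_def G_def Set_def by simp
  have uA: "u t = A t bz - m" for t unfolding u_def Atil_def m_def by simp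
  have cAb: "continuous_on UNIV (\<lambda>t. A t bz)"
    using vA has_vector_derivative_continuous continuous_at_imp_continuous_on by blast
  have cu: "continuous_on UNIV u" unfolding uA by (intro continuous_intros cAb)
  have intc: "f integrable_on {c..d}" if "continuous_on UNIV f" for f :: "real \<Rightarrow> 'z::banach" and c d
    by (rule integrable_continuous_real) (rule continuous_on_subset[OF that], simp)
  have peru: "u (t + T) = u t" for t unfolding uA using perA by simp
  have intA: "(\<lambda>s. A s bz) integrable_on {0..T}" by (rule intc[OF cAb])
  have intu: "integral {0..T} u = 0"
  proof -
    have "integral {0..T} u = integral {0..T} (\<lambda>s. A s bz) - integral {0..T} (\<lambda>s. m)"
      unfolding uA by (rule integral_diff[OF intA]) (rule intc, simp)
    also have "\<dots> = 0" using T0 unfolding m_def by simp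
    finally show ?thesis .
  qed
  have dAb: "norm (dtA A t bz) \<le> 1" for t
  proof -
    have "bounded_linear (frechet_derivative (A t) (at bz))"
      using fA has_derivative_bounded_linear by blast
    then have "onorm (frechet_derivative (A t) (at bz)) \<ge> 0" by (rule onorm_pos_le)
    moreover have "norm bz \<ge> RA" using bzA T0 by simp
    moreover have "norm (dtA A t bz) + onorm (frechet_derivative (A t) (at bz)) < 1"
      using RA \<open>norm bz \<ge> RA\<close> by blast
    ultimately show ?thesis by linarith
  qed
  have lipA: "norm (A t bz - A s bz) \<le> 1 * norm (t - s)" for t s
  proof (rule differentiable_bound[where S=UNIV and f'="\<lambda>x h. h *\<^sub>R dtA A x bz"])
    fix x :: real
    show "((\<lambda>s. A s bz) has_derivative (\<lambda>h. h *\<^sub>R dtA A x bz)) (at x within UNIV)"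
      using vA[where t=x and x=bz] unfolding has_vector_derivative_def by simp
    show "onorm (\<lambda>h. h *\<^sub>R dtA A x bz) \<le> 1" using dAb by (simp add: onorm_scaleR_vec)
  qed auto
  have Mu0: "norm (u t) \<le> T" if t: "t \<in> {0..T}" for t
  proof -
    have "integral {0..T} (\<lambda>s. A t bz - A s bz) = integral {0..T} (\<lambda>s. A t bz) - integral {0..T} (\<lambda>s. A s bz)"
      by (rule integral_diff[OF _ intA]) (rule intc, simp)
    then have eq0: "integral {0..T} (\<lambda>s. A t bz - A s bz) = T *\<^sub>R A t bz - integral {0..T} (\<lambda>s. A s bz)"
      using T0 by simp
    have eq: "u t = (1 / T) *\<^sub>R integral {0..T} (\<lambda>s. A t bz - A s bz)"
      using T0 unfolding uA m_def eq0 by (simp add: scaleR_diff_right)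
    have "norm (integral {0..T} (\<lambda>s. A t bz - A s bz)) \<le> integral {0..T} (\<lambda>s. T)"
    proof (rule integral_norm_bound_integral)
      show "(\<lambda>s. A t bz - A s bz) integrable_on {0..T}" by (rule integrable_diff[OF _ intA]) (rule intc, simp)
      show "(\<lambda>s. T) integrable_on {0..T}" by (rule intc, simp)
      fix s assume "s \<in> {0..T}"
      then show "norm (A t bz - A s bz) \<le> T" using lipA[of t s] t by auto
    qed
    also have "\<dots> = T * T" using T0 by simp
    finally show ?thesis using T0 unfolding eq by (simp add: field_simps)
  qed
  have Mu: "norm (u t) \<le> T" for t
    using periodic_reduce[OF T0, of u t] peru Mu0 by auto
  have cu2: "continuous_on UNIV (\<lambda>t. (norm (u t))\<^sup>2)" by (intro continuous_intros cu)
  have a_ge: "a \<ge> 0" unfolding a_def by (rule integral_nonneg[OF intc[OF cu2]]) simp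
  have a0: "a > 0"
  proof (rule ccontr)
    assume "\<not> a > 0"
    then have "a = 0" using a_ge by simp
    then have hi: "((\<lambda>t. (norm (u t))\<^sup>2) has_integral 0) (cbox 0 T)"
      using intc[OF cu2, of 0 T] unfolding a_def by (simp add: has_integral_iff)
    have z0: "u t = 0" if "t \<in> {0..T}" for t
    proof -
      have "(norm (u t))\<^sup>2 = 0"
        by (rule has_integral_0_cbox_imp_0[OF continuous_on_subset[OF cu2] _ hi]) (use that T0 in auto)
      then show ?thesis by simp
    qed
    have "u t = 0" for t using periodic_reduce[OF T0, of u t] peru z0 by auto
    then have "(\<lambda>s. A s bz) = (\<lambda>s. m)" unfolding uA by auto
    then have "dtA A t bz = 0" for t unfolding dtA_def by simp
    then show False using dt by blast
  qed
  obtain g where g': "\<And>t. (g has_vector_derivative u t) (at t)"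
    and g0: "\<And>t. t \<ge> 0 \<Longrightarrow> g t = integral {0..t} u"
    using antiderivative_UNIV[OF cu] by blast
  have perg: "g (t + T) = g t" for t
  proof -
    have "\<exists>c. \<forall>x\<in>UNIV. g (x + T) - g x = c"
    proof (rule has_derivative_zero_constant[OF convex_UNIV])
      fix x :: real
      have "((g \<circ> (\<lambda>t. t + T)) has_vector_derivative (1 *\<^sub>R u (x + T))) (at x)"
        by (rule vector_diff_chain_at[OF _ g']) (auto intro!: derivative_eq_intros)
      then have "((\<lambda>t. g (t + T) - g t) has_vector_derivative (u (x + T) - u x)) (at x)"
        using g'[of x] by (auto simp: o_def intro: derivative_intros)
      then show "((\<lambda>t. g (t + T) - g t) has_derivative (\<lambda>h. 0)) (at x within UNIV)"
        unfolding has_vector_derivative_def peru by simp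
    qed
    then obtain c where c: "\<And>x. g (x + T) - g x = c" by blast
    have "c = 0" using c[of 0] g0[of T] g0[of 0] T0 intu by simp
    then show ?thesis using c[of t] by simp
  qed
  define WW where "WW = integral {0..T} (\<lambda>s. norm (u s))"
  have cnu: "continuous_on UNIV (\<lambda>t. norm (u t))" by (intro continuous_intros cu)
  have gb: "norm (g t) \<le> WW" if "t \<in> {0..T}" for t
  proof -
    have "norm (g t) \<le> integral {0..t} (\<lambda>s. norm (u s))"
      using that g0[of t] by (auto intro!: integral_norm_bound_integral intc cu cnu)
    also have "\<dots> \<le> WW" unfolding WW_def
      using that by (intro integral_subset_le intc cnu) auto
    finally show ?thesis .
  qed
  have WT: "WW \<le> T * T"
  proof -
    have "WW \<le> integral {0..T} (\<lambda>s. T)" unfolding WW_def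
      using Mu by (intro integral_le intc cnu) auto
    then show ?thesis using T0 by simp
  qed
  have W0: "WW \<ge> 0" unfolding WW_def by (rule integral_nonneg[OF intc[OF cnu]]) simp
  have Wa: "WW \<le> sqrt (a * T)"
  proof -
    define c where "c = sqrt (a / T)"
    have c0: "c > 0" unfolding c_def using a0 T0 by simp
    have c2: "c\<^sup>2 * T = a" unfolding c_def using a0 T0 by simp
    have "integral {0..T} (\<lambda>s. 2 * c * norm (u s)) \<le> integral {0..T} (\<lambda>s. (norm (u s))\<^sup>2 + c\<^sup>2)"
    proof (rule integral_le)
      show "(\<lambda>s. 2 * c * norm (u s)) integrable_on {0..T}" by (intro intc continuous_intros cu)
      show "(\<lambda>s. (norm (u s))\<^sup>2 + c\<^sup>2) integrable_on {0..T}" by (intro intc continuous_intros cu)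
      fix s
      have "0 \<le> (norm (u s) - c)\<^sup>2" by simp
      then show "2 * c * norm (u s) \<le> (norm (u s))\<^sup>2 + c\<^sup>2" by (simp add: power2_diff mult.commute mult.left_commute)
    qed
    moreover have "integral {0..T} (\<lambda>s. 2 * c * norm (u s)) = 2 * c * WW"
      unfolding WW_def by simp
    moreover have "integral {0..T} (\<lambda>s. (norm (u s))\<^sup>2 + c\<^sup>2) = a + c\<^sup>2 * T"
      unfolding a_def using T0 by (subst integral_add) (auto intro: intc cu2)
    ultimately have "2 * c * WW \<le> 2 * a" using c2 by linarith
    then have "c * WW \<le> a" by simp
    then have "WW \<le> a / c" using c0 by (simp add: field_simps)
    then have "WW\<^sup>2 \<le> (a / c)\<^sup>2" using W0 by (simp add: power_mono)
    also have "\<dots> = a * T" using c2 c0 a0 T0 by (simp add: power_divide field_simps power2_eq_square)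
    finally show ?thesis by (rule real_le_rsqrt)
  qed
  define q where "q t = bz - lam *\<^sub>R g t" for t
  have q': "(q has_vector_derivative - (lam *\<^sub>R u t)) (at t)" for t
    unfolding q_def by (auto intro!: derivative_eq_intros g')
  have vq: "vector_derivative q (at t) = - (lam *\<^sub>R u t)" for t
    using q' by (rule vector_derivative_at)
  have nq': "norm (- (lam *\<^sub>R u t)) \<le> 1/2" for t
  proof -
    have "norm (- (lam *\<^sub>R u t)) = lam * norm (u t)" using lam0 by simp
    also have "\<dots> \<le> lam * T" using Mu lam0 by (simp add: mult_left_mono)
    also have "\<dots> \<le> 1/2" using lamT lam0 by (simp add: algebra_simps)
    finally show ?thesis .
  qed
  have perq: "q (t + T) = q t" for t unfolding q_def perg by simp
  have lipq: "1-lipschitz_on UNIV q"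
  proof (rule lipschitz_onI)
    fix x y :: real
    have "norm (q x - q y) \<le> 1 * norm (x - y)"
    proof (rule differentiable_bound[where S=UNIV and f'="\<lambda>t h. h *\<^sub>R (- (lam *\<^sub>R u t))"])
      fix t :: real
      show "(q has_derivative (\<lambda>h. h *\<^sub>R (- (lam *\<^sub>R u t)))) (at t within UNIV)"
        using q'[of t] unfolding has_vector_derivative_def by simp
      show "onorm (\<lambda>h. h *\<^sub>R (- (lam *\<^sub>R u t))) \<le> 1"
        using nq'[of t] by (simp only: onorm_scaleR_vec)
    qed auto
    then show "dist (q x) (q y) \<le> 1 * dist x y" by (simp add: dist_norm)
  qed simp
  have qb: "norm (q t - bz) \<le> lam * WW" if "t \<in> {0..T}" for t
    using gb[OF that] lam0 unfolding q_def by (simp add: mult_left_mono)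
  have lWT: "lam * WW \<le> T / 2"
  proof -
    have "lam * WW \<le> lam * (T * T)" using WT lam0 by (simp add: mult_left_mono)
    also have "\<dots> \<le> lam * (T * (1 + T))" using T0 lam0 by (simp add: mult_left_mono)
    also have "\<dots> = T * (lam * (1 + T))" by (simp only: mult.left_commute)
    also have "\<dots> = T / 2" unfolding lamT by simp
    finally show ?thesis .
  qed
  define Cb where "Cb = cball bz T"
  have qC: "q t \<in> Cb" if "t \<in> {0..T}" for t
    using qb[OF that] lWT T0 unfolding Cb_def by (simp add: dist_norm norm_minus_commute)
  have Cnorm: "norm y \<ge> norm bz - T" if "y \<in> Cb" for y
    using that norm_triangle_ineq2[of bz y] unfolding Cb_def by (simp add: dist_norm)
  have CS: "y \<notin> S" if "y \<in> Cb" for y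
    using Cnorm[OF that] bzS BS by force
  have qLam: "q t \<notin> S" for t
    using periodic_reduce[OF T0, of q t] perq qC CS by auto
  have nv: "norm (vector_derivative q (at t)) \<le> 1" for t
    using vq nq'[of t] by simp
  have AEq: "AE t in lebesgue. q differentiable (at t) \<longrightarrow> norm (vector_derivative q (at t)) \<le> 1"
    using nv by simp
  have qW: "q \<in> W T" unfolding W_def using lipq perq by blast
  have qK: "q \<in> KLam T S"
    unfolding KLam_def K_def Lam_def using qW AEq qLam by blast
  have bzC: "bz \<in> Cb" unfolding Cb_def using T0 by simp
  have CA: "norm y \<ge> RA" if "y \<in> Cb" for y using Cnorm[OF that] bzA by simp
  have CP: "norm y \<ge> RP" if "y \<in> Cb" for y using Cnorm[OF that] bzP by simp
  have lipAx: "norm (A t y - A t z) \<le> 1 * norm (y - z)" if "y \<in> Cb" "z \<in> Cb" for t y z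
  proof (rule differentiable_bound[where S=Cb and f'="\<lambda>x. frechet_derivative (A t) (at x)"])
    show "convex Cb" unfolding Cb_def by simp
    fix x assume x: "x \<in> Cb"
    show "(A t has_derivative frechet_derivative (A t) (at x)) (at x within Cb)"
      by (rule has_derivative_at_withinI[OF fA])
    have "norm (dtA A t x) + onorm (frechet_derivative (A t) (at x)) < 1"
      using RA CA[OF x] by blast
    then show "onorm (frechet_derivative (A t) (at x)) \<le> 1" using norm_ge_zero[of "dtA A t x"] by linarith
  qed (use that in auto)
  have bddG: "bdd_above ((\<lambda>(t, y). norm (grad Phi t y)) ` Set)"
  proof (rule bdd_aboveI[where M=1])
    fix z assume "z \<in> (\<lambda>(t, y). norm (grad Phi t y)) ` Set"
    then obtain t y where z: "z = norm (grad Phi t y)" and "y \<notin> S" "norm y \<ge> norm bz - T"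
      unfolding Set_def by auto
    then have "norm y \<ge> RP" using bzP by simp
    moreover have "y \<in> - S" using \<open>y \<notin> S\<close> by simp
    ultimately have "norm (grad Phi t y) < 1" using RP by blast
    then show "z \<le> 1" using z by simp
  qed
  have gradG: "norm (grad Phi t y) \<le> G" if "t \<in> {0..T}" "y \<in> Cb" for t y
  proof -
    have "(t, y) \<in> Set" unfolding Set_def using that CS Cnorm by auto
    from cSUP_upper[OF this bddG] show ?thesis unfolding G_def by simp
  qed
  have "norm (grad Phi 0 bz) \<le> G" using gradG[of 0 bz] bzC T0 by simp
  then have G0: "G \<ge> 0" by (rule order_trans[OF norm_ge_zero])
  have lipPhi: "\<bar>Phi t y - Phi t z\<bar> \<le> G * norm (y - z)" if t: "t \<in> {0..T}" and "y \<in> Cb" "z \<in> Cb" for t y z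
  proof -
    have "norm (Phi t y - Phi t z) \<le> G * norm (y - z)"
    proof (rule differentiable_bound[where S=Cb and f'="\<lambda>x. frechet_derivative (Phi t) (at x)"])
      show "convex Cb" unfolding Cb_def by simp
      fix x assume x: "x \<in> Cb"
      have dx: "Phi t differentiable (at x)" using P4 CS[OF x] by blast
      then show "(Phi t has_derivative frechet_derivative (Phi t) (at x)) (at x within Cb)"
        using frechet_derivative_works has_derivative_at_withinI by blast
      show "onorm (frechet_derivative (Phi t) (at x)) \<le> G"
        using frechet_grad_onorm[where Phi=Phi and t=t and x=x, OF dx] gradG[OF t x] by linarith
    qed (use that in auto)
    then show ?thesis by simp
  qed
  have cq: "continuous_on UNIV q"
    using q' has_vector_derivative_continuous continuous_at_imp_continuous_on by blast
  have cAq: "continuous_on UNIV (\<lambda>t. A t (q t))"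
  proof -
    have "continuous_on UNIV (\<lambda>t. (t, q t))" by (intro continuous_intros cq)
    from continuous_on_compose2[OF cA this] show ?thesis by simp
  qed
  have cPq: "continuous_on {0..T} (\<lambda>t. Phi t (q t))"
    unfolding continuous_on_def
  proof
    fix x assume x: "x \<in> {0..T}"
    have "continuous_on UNIV (\<lambda>t. Phi t (q x))" using P3 CS[OF qC[OF x]] by blast
    then have l1: "((\<lambda>t. Phi t (q x)) \<longlongrightarrow> Phi x (q x)) (at x within {0..T})"
      by (meson UNIV_I continuous_on_def tendsto_within_subset subset_UNIV)
    have l2: "((\<lambda>t. Phi t (q t) - Phi t (q x)) \<longlongrightarrow> 0) (at x within {0..T})"
    proof (rule Lim_null_comparison)
      show "\<forall>\<^sub>F t in at x within {0..T}. norm (Phi t (q t) - Phi t (q x)) \<le> G * norm (q t - q x)"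
        unfolding eventually_at_filter using lipPhi qC x by (auto intro!: always_eventually)
      have "(q \<longlongrightarrow> q x) (at x within {0..T})"
        using cq by (meson UNIV_I continuous_on_def tendsto_within_subset subset_UNIV)
      then have "((\<lambda>t. G * norm (q t - q x)) \<longlongrightarrow> G * norm (q x - q x)) (at x within {0..T})"
        by (intro tendsto_intros)
      then show "((\<lambda>t. G * norm (q t - q x)) \<longlongrightarrow> 0) (at x within {0..T})" by simp
    qed
    have "((\<lambda>t. (Phi t (q t) - Phi t (q x)) + Phi t (q x)) \<longlongrightarrow> 0 + Phi x (q x)) (at x within {0..T})"
      by (rule tendsto_add[OF l2 l1])
    then show "((\<lambda>t. Phi t (q t)) \<longlongrightarrow> Phi x (q x)) (at x within {0..T})" by simp
  qed
  have bznS: "bz \<in> - S" using CS[OF bzC] by simp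
  have intPb: "(\<lambda>t. Phi t bz) integrable_on {0..T}" using P3 bznS by (intro intc) blast
  define Kf where "Kf t = 1 - sqrt (1 - (norm (- (lam *\<^sub>R u t)))\<^sup>2)" for t
  define Lf where "Lf t = - (lam *\<^sub>R u t) \<bullet> A t (q t) - Phi t (q t)" for t
  define Rf where "Rf t = - lam * (norm (u t))\<^sup>2 - lam * (u t \<bullet> m) + (lam * lam * WW) * norm (u t)
      - Phi t bz + G * lam * WW" for t
  have act: "action T S A Phi q = ereal (integral {0..T} Kf + integral {0..T} Lf)"
    using qK unfolding action_def Kf_def Lf_def vq by simp
  have KI: "integral {0..T} Kf \<le> lam\<^sup>2 * a"
  proof -
    have "integral {0..T} Kf \<le> integral {0..T} (\<lambda>t. lam\<^sup>2 * (norm (u t))\<^sup>2)"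
    proof (rule integral_le)
      show "Kf integrable_on {0..T}" unfolding Kf_def by (intro intc continuous_intros cu)
      show "(\<lambda>t. lam\<^sup>2 * (norm (u t))\<^sup>2) integrable_on {0..T}" by (intro intc continuous_intros cu)
      fix t
      have "Kf t \<le> (norm (- (lam *\<^sub>R u t)))\<^sup>2"
        unfolding Kf_def using nq'[of t] by (intro kin_bound) auto
      also have "\<dots> = lam\<^sup>2 * (norm (u t))\<^sup>2" using lam0 by (simp add: power_mult_distrib)
      finally show "Kf t \<le> lam\<^sup>2 * (norm (u t))\<^sup>2" .
    qed
    also have "\<dots> = lam\<^sup>2 * a" unfolding a_def by simp
    finally show ?thesis .
  qed
  have LR: "Lf t \<le> Rf t" if t: "t \<in> {0..T}" for t
  proof -
    let ?d = "A t (q t) - A t bz"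
    have Aq: "A t (q t) = u t + m + ?d" unfolding uA by simp
    have e0: "- (lam *\<^sub>R u t) \<bullet> A t (q t) = - (lam *\<^sub>R u t) \<bullet> (u t + m + ?d)"
      by (rule arg_cong[where f="\<lambda>z. - (lam *\<^sub>R u t) \<bullet> z", OF Aq])
    have e1: "- (lam *\<^sub>R u t) \<bullet> A t (q t) = - lam * (norm (u t))\<^sup>2 - lam * (u t \<bullet> m) - lam * (u t \<bullet> ?d)"
      unfolding e0 by (rule inner_expand)
    have "\<bar>u t \<bullet> ?d\<bar> \<le> norm (u t) * norm ?d" by (rule Cauchy_Schwarz_ineq2)
    also have "\<dots> \<le> norm (u t) * (lam * WW)"
    proof (rule mult_left_mono)
      have "norm ?d \<le> 1 * norm (q t - bz)" by (rule lipAx[OF qC[OF t] bzC])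
      then show "norm ?d \<le> lam * WW" using qb[OF t] by simp
    qed simp
    finally have d1: "\<bar>u t \<bullet> ?d\<bar> \<le> norm (u t) * (lam * WW)" .
    have "- lam * (u t \<bullet> ?d) \<le> lam * \<bar>u t \<bullet> ?d\<bar>" using lam0
      by (metis abs_ge_minus_self minus_mult_left mult_left_mono less_imp_le mult_minus_right)
    also have "\<dots> \<le> lam * (norm (u t) * (lam * WW))" using d1 lam0 by (simp add: mult_left_mono)
    finally have d1': "- lam * (u t \<bullet> ?d) \<le> (lam * lam * WW) * norm (u t)" by (simp add: algebra_simps)
    have "Phi t bz - Phi t (q t) \<le> G * norm (bz - q t)" using lipPhi[OF t bzC qC[OF t]] by simp
    also have "\<dots> \<le> G * (lam * WW)"
      using qb[OF t] G0 by (simp add: mult_left_mono norm_minus_commute)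
    finally have d2: "Phi t bz - Phi t (q t) \<le> G * lam * WW" by (simp add: algebra_simps)
    show ?thesis unfolding Lf_def Rf_def e1 using d1' d2 by linarith
  qed
  have cLf: "continuous_on UNIV (\<lambda>t. - (lam *\<^sub>R u t) \<bullet> A t (q t))" by (intro continuous_intros cu cAq)
  have intLf: "Lf integrable_on {0..T}" unfolding Lf_def
    by (intro integrable_diff integrable_continuous_real cPq continuous_on_subset[OF cLf]) auto
  have hR: "(Rf has_integral (- lam * a - lam * 0 + (lam * lam * WW) * WW - phi T Phi bz + G * lam * WW * T)) {0..T}"
  proof -
    have h1: "((\<lambda>t. (norm (u t))\<^sup>2) has_integral a) {0..T}" unfolding a_def by (intro integrable_integral intc cu2)
    have h2: "((\<lambda>t. u t \<bullet> m) has_integral 0) {0..T}"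
    proof -
      have iu: "u integrable_on {0..T}" by (rule intc[OF cu])
      have "integral {0..T} (\<lambda>t. u t \<bullet> m) = 0" using integral_component_eq[OF iu, of m] intu by simp
      moreover have "(\<lambda>t. u t \<bullet> m) integrable_on {0..T}" by (intro intc continuous_intros cu)
      ultimately show ?thesis using has_integral_integral by metis
    qed
    have h3: "((\<lambda>t. norm (u t)) has_integral WW) {0..T}" unfolding WW_def by (intro integrable_integral intc cnu)
    have h4: "((\<lambda>t. Phi t bz) has_integral phi T Phi bz) {0..T}" unfolding phi_def by (intro integrable_integral intPb)
    have h5: "((\<lambda>t. G * lam * WW) has_integral (G * lam * WW * T)) {0..T}"
      using has_integral_const_real[of "G * lam * WW" 0 T] T0 by (simp add: mult.commute)
    show ?thesis unfolding Rf_def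
      by (intro has_integral_add has_integral_diff has_integral_mult_right h1 h2 h3 h4 h5)
  qed
  have LI: "integral {0..T} Lf \<le> - lam * a + lam * lam * WW * WW - phi T Phi bz + G * lam * WW * T"
  proof -
    have "integral {0..T} Lf \<le> integral {0..T} Rf"
      using LR by (intro integral_le intLf) (use hR in auto)
    also have "\<dots> = - lam * a - lam * 0 + (lam * lam * WW) * WW - phi T Phi bz + G * lam * WW * T"
      using hR by (rule integral_unique)
    finally show ?thesis by simp
  qed
  have sa: "sqrt a > 0" using a0 by simp
  have WW2: "WW * WW \<le> a * T"
  proof -
    have "WW * WW \<le> sqrt (a * T) * sqrt (a * T)" using Wa W0 a0 T0 by (intro mult_mono) auto
    then show ?thesis using a0 T0 by simp
  qed
  have f1: "lam * lam * WW * WW \<le> lam * lam * (a * T)"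
    using WW2 lam0 by (simp add: mult_left_mono mult.assoc)
  have Gb: "G \<le> sqrt a / (4 * T * sqrt T)"
  proof -
    have "G / sqrt a < 1 / (4 * T * sqrt T)" using h8' abs_ge_self[of "G / sqrt a"] by linarith
    then have "G < sqrt a / (4 * T * sqrt T)" using sa T0 by (simp add: field_simps)
    then show ?thesis by simp
  qed
  have WWb: "WW \<le> sqrt a * sqrt T" using Wa by (simp add: real_sqrt_mult)
  have f2: "G * WW * T \<le> a / 4"
  proof -
    have "G * WW * T \<le> (sqrt a / (4 * T * sqrt T)) * (sqrt a * sqrt T) * T"
      using Gb WWb G0 W0 T0 by (intro mult_right_mono mult_mono) auto
    also have "\<dots> = a / 4" using T0 a0 by (simp add: field_simps)
    finally show ?thesis .
  qed
  have f3: "- phi T Phi bz < lam * a / 4"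
  proof -
    have "- (phi T Phi bz / a) < lam / 4" using h7' by linarith
    then show ?thesis using a0 by (simp add: field_simps)
  qed
  have f4: "lam * lam * a + lam * lam * (a * T) = lam * a / 2"
  proof -
    have "lam * lam * a + lam * lam * (a * T) = lam * a * (lam * (1 + T))" by (simp add: algebra_simps)
    then show ?thesis unfolding lamT by simp
  qed
  have f5: "G * lam * WW * T \<le> lam * a / 4"
    using mult_left_mono[OF f2, of lam] lam0 by (simp add: algebra_simps)
  have "integral {0..T} Kf + integral {0..T} Lf < 0"
  proof -
    have KI': "integral {0..T} Kf \<le> lam * lam * a" using KI by (simp add: power2_eq_square)
    show ?thesis using KI' LI f1 f3 f4 f5 by linarith
  qed
  then have "action T S A Phi q < 0" unfolding act by (simp add: zero_ereal_def)
  then show ?thesis using qK by blast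
qed

theorem mainTheorem12:
  fixes T :: real and S :: "vec3 set"
    and A :: "real \<Rightarrow> vec3 \<Rightarrow> vec3" and Phi :: "real \<Rightarrow> vec3 \<Rightarrow> real"
    and b :: "nat \<Rightarrow> vec3"
  assumes "T > 0" and "compact S"
    and "AP T S A Phi"
    and "\<forall>n. b n \<notin> S"
    and "filterlim (\<lambda>n. norm (b n)) at_top sequentially"
    and "\<forall>n. \<exists>t. dtA A t (b n) \<noteq> 0"
    and "(\<lambda>n. phi T Phi (b n) / integral {0..T} (\<lambda>t. (norm (Atil T A t (b n)))\<^sup>2))
           \<longlonglongrightarrow> 0"
    and "(\<lambda>n. (SUP (t, y)\<in>{(t, y). t \<in> {0..T} \<and> y \<notin> S \<and> norm y \<ge> norm (b n) - T}.
                 norm (grad Phi t y))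
             / sqrt (integral {0..T} (\<lambda>t. (norm (Atil T A t (b n)))\<^sup>2)))
           \<longlonglongrightarrow> 0"
  shows "\<exists>q\<in>KLam T S. action T S A Phi q < 0"
proof -
  note T0 = assms(1)
  have cAc: "classA T A" and cPc: "classP T S Phi" using assms(3) unfolding AP_def by auto
  note AF = classA_facts[OF cAc]
  obtain RA where RA: "\<forall>t x. norm x \<ge> RA \<longrightarrow> norm (dtA A t x) + onorm (frechet_derivative (A t) (at x)) < 1"
    using AF(5)[of 1] by auto
  have P3: "\<forall>x\<in>-S. continuous_on UNIV (\<lambda>t. Phi t x)"
    and P4: "\<forall>t. \<forall>x\<in>-S. Phi t differentiable (at x)"
    and P5: "\<forall>e>0. \<exists>R. \<forall>t. \<forall>x\<in>-S. norm x \<ge> R \<longrightarrow> norm (grad Phi t x) < e"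
    using cPc unfolding classP_def by auto
  obtain RP where RP: "\<forall>t. \<forall>x\<in>-S. norm x \<ge> RP \<longrightarrow> norm (grad Phi t x) < 1"
    using P5 by (meson zero_less_one)
  obtain BS where BS: "\<forall>x\<in>S. norm x \<le> BS"
    using compact_imp_bounded[OF assms(2)] unfolding bounded_iff by blast
  define lam :: real where "lam = 1 / (2 * (1 + T))"
  have lam0: "lam / 4 > 0" using T0 unfolding lam_def by simp
  have e0: "1 / (4 * T * sqrt T) > 0" using T0 by simp
  have ev1: "\<forall>\<^sub>F n in sequentially. T + max RA (max RP (BS + 1)) \<le> norm (b n)"
    using assms(5) unfolding filterlim_at_top by blast
  have ev2: "\<forall>\<^sub>F n in sequentially. \<bar>phi T Phi (b n) / integral {0..T} (\<lambda>t. (norm (Atil T A t (b n)))\<^sup>2)\<bar> < lam / 4"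
    using tendstoD[OF assms(7) lam0] by (simp add: dist_real_def)
  have ev3: "\<forall>\<^sub>F n in sequentially. \<bar>(SUP (t, y)\<in>{(t, y). t \<in> {0..T} \<and> y \<notin> S \<and> norm y \<ge> norm (b n) - T}.
                 norm (grad Phi t y))
             / sqrt (integral {0..T} (\<lambda>t. (norm (Atil T A t (b n)))\<^sup>2))\<bar> < 1 / (4 * T * sqrt T)"
    using tendstoD[OF assms(8) e0] by (simp add: dist_real_def)
  obtain n where n1: "T + max RA (max RP (BS + 1)) \<le> norm (b n)"
    and n2: "\<bar>phi T Phi (b n) / integral {0..T} (\<lambda>t. (norm (Atil T A t (b n)))\<^sup>2)\<bar> < lam / 4"
    and n3: "\<bar>(SUP (t, y)\<in>{(t, y). t \<in> {0..T} \<and> y \<notin> S \<and> norm y \<ge> norm (b n) - T}.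
                 norm (grad Phi t y))
             / sqrt (integral {0..T} (\<lambda>t. (norm (Atil T A t (b n)))\<^sup>2))\<bar> < 1 / (4 * T * sqrt T)"
    using eventually_happens'[OF sequentially_bot eventually_conj[OF ev1 eventually_conj[OF ev2 ev3]]]
    by blast
  show ?thesis
  proof (rule core[where bz="b n" and RA=RA and RP=RP and BS=BS])
    show "T > 0" by (rule T0)
    show "\<And>t x. ((\<lambda>s. A s x) has_vector_derivative dtA A t x) (at t)" by (rule AF(1))
    show "\<And>t x. (A t has_derivative frechet_derivative (A t) (at x)) (at x)" by (rule AF(2))
    show "continuous_on UNIV (\<lambda>z. A (fst z) (snd z))" by (rule AF(3))
    show "\<And>t x. A (t + T) x = A t x" by (rule AF(4))
    show "\<forall>t x. norm x \<ge> RA \<longrightarrow> norm (dtA A t x) + onorm (frechet_derivative (A t) (at x)) < 1" by (rule RA)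
    show "\<forall>x\<in>-S. continuous_on UNIV (\<lambda>t. Phi t x)" by (rule P3)
    show "\<forall>t. \<forall>x\<in>-S. Phi t differentiable (at x)" by (rule P4)
    show "\<forall>t. \<forall>x\<in>-S. norm x \<ge> RP \<longrightarrow> norm (grad Phi t x) < 1" by (rule RP)
    show "\<forall>x\<in>S. norm x \<le> BS" by (rule BS)
    show "norm (b n) \<ge> T + RA" "norm (b n) \<ge> T + RP" "norm (b n) \<ge> T + BS + 1" using n1 by auto
    show "\<exists>t. dtA A t (b n) \<noteq> 0" using assms(6) by blast
    show "\<bar>phi T Phi (b n) / integral {0..T} (\<lambda>t. (norm (Atil T A t (b n)))\<^sup>2)\<bar> < (1 / (2 * (1 + T))) / 4"
      using n2 unfolding lam_def .
    show "\<bar>(SUP (t, y)\<in>{(t, y). t \<in> {0..T} \<and> y \<notin> S \<and> norm y \<ge> norm (b n) - T}.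
                 norm (grad Phi t y))
             / sqrt (integral {0..T} (\<lambda>t. (norm (Atil T A t (b n)))\<^sup>2))\<bar> < 1 / (4 * T * sqrt T)"
      by (rule n3)
  qed
qed

end
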